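(* Fix single-party measurements on $\mathbb C^2$ given by orthonormal bases $\{|a_i\rangle\}$, $\{|a'_i\rangle\}$, $\{|b_j\rangle\}$, $\{|b'_j\rangle\}$, and let $e_{AB},e_{AB'},e_{A'B},e_{A'B'}$ be four measurements on $\mathbb C^2\otimes\mathbb C^2$ (each given by an orthonormal basis $\{|p_{X_iY_j}\rangle\}_{i,j=1,2}$ of $\mathbb C^4$ with outcomes $\lambda_{X_iY_j}$), performed on a state given by a unit vector $|p\rangle$ (probabilities $p(\lambda_{X_iY_j})=|\langle p_{X_iY_j}|p\rangle|^2$). Call $e_{XY}$ product if $|p_{X_iY_j}\rangle=|x_i\rangle\otimes|y_j\rangle$ for all $i,j$, where $\{|x_i\rangle\}$, $\{|y_j\rangle\}$ are the fixed bases corresponding to $X$ and $Y$. If the marginal distribution law fails for each of the four pairs $(e_{AB},e_{AB'})$, $(e_{A'B},e_{A'B'})$, $(e_{AB},e_{A'B})$, $(e_{AB'},e_{A'B'})$, then at least two of the four measurements are not product (i.e. are entangled).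
   Context: Marginal distribution law: for coincidence measurements $e_{XY}$ ($X\in\{A,A'\}$, $Y\in\{B,B'\}$) with outcomes $\lambda_{X_iY_j}$, $i,j=1,2$, and probabilities $p(\lambda_{X_iY_j})$, the law holds for a pair $e_{XY},e_{XY'}$ sharing the first letter if $\sum_j p(\lambda_{X_iY_j})=\sum_j p(\lambda_{X_iY'_j})$ for $i=1,2$, and for a pair $e_{XY},e_{X'Y}$ sharing the second letter if $\sum_j p(\lambda_{X_jY_i})=\sum_j p(\lambda_{X'_jY_i})$ for $i=1,2$. *)

theory Defs
  imports Complex_Main "HOL-Library.Numeral_Type"
begin

text \<open>Vectors of C^n are functions from a finite index type to complex.
  C^2 is indexed by the two-element type 2 (elements 0,1 standing for outcomes 1,2);
  C^2 (x) C^2 = C^4 is indexed by 2 \<times> 2.\<close>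

definition cinner :: "('i::finite \<Rightarrow> complex) \<Rightarrow> ('i \<Rightarrow> complex) \<Rightarrow> complex" where
  "cinner u v = (\<Sum>i\<in>UNIV. cnj (u i) * v i)"

definition unit_vec :: "('i::finite \<Rightarrow> complex) \<Rightarrow> bool" where
  "unit_vec v \<longleftrightarrow> cinner v v = 1"

definition is_onb :: "('k::finite \<Rightarrow> 'i::finite \<Rightarrow> complex) \<Rightarrow> bool" where
  "is_onb b \<longleftrightarrow> CARD('k) = CARD('i) \<and>
     (\<forall>k l. cinner (b k) (b l) = (if k = l then 1 else 0))"

definition tensor :: "(2 \<Rightarrow> complex) \<Rightarrow> (2 \<Rightarrow> complex) \<Rightarrow> (2 \<times> 2 \<Rightarrow> complex)" where
  "tensor x y = (\<lambda>(i, j). x i * y j)"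

text \<open>A coincidence measurement e_XY: orthonormal basis |p_{X_i Y_j}> of C^4.\<close>
type_synonym meas = "2 \<Rightarrow> 2 \<Rightarrow> (2 \<times> 2 \<Rightarrow> complex)"

definition is_meas :: "meas \<Rightarrow> bool" where
  "is_meas e \<longleftrightarrow> is_onb (\<lambda>(i, j). e i j)"

definition prob :: "meas \<Rightarrow> (2 \<times> 2 \<Rightarrow> complex) \<Rightarrow> 2 \<Rightarrow> 2 \<Rightarrow> real" where
  "prob e p i j = (cmod (cinner (e i j) p))\<^sup>2"

definition marginal_first :: "meas \<Rightarrow> meas \<Rightarrow> (2 \<times> 2 \<Rightarrow> complex) \<Rightarrow> bool" where
  "marginal_first e f p \<longleftrightarrow> (\<forall>i. (\<Sum>j\<in>UNIV. prob e p i j) = (\<Sum>j\<in>UNIV. prob f p i j))"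

definition marginal_second :: "meas \<Rightarrow> meas \<Rightarrow> (2 \<times> 2 \<Rightarrow> complex) \<Rightarrow> bool" where
  "marginal_second e f p \<longleftrightarrow> (\<forall>i. (\<Sum>j\<in>UNIV. prob e p j i) = (\<Sum>j\<in>UNIV. prob f p j i))"

definition is_product :: "meas \<Rightarrow> (2 \<Rightarrow> 2 \<Rightarrow> complex) \<Rightarrow> (2 \<Rightarrow> 2 \<Rightarrow> complex) \<Rightarrow> bool" where
  "is_product e x y \<longleftrightarrow> (\<forall>i j. e i j = tensor (x i) (y j))"

end

theory Submission
  imports Defs
begin

lemma UNIV2: "(UNIV :: 2 set) = {0, 1}"
proof -
  have "card (UNIV :: 2 set) = 2" by simp
  moreover have "{0,1} \<subseteq> (UNIV::2 set)" by simp
  moreover have "card {0, 1::2} = 2" by simp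
  ultimately show ?thesis by (metis card_subset_eq finite)
qed

lemma sum2: "(\<Sum>i\<in>(UNIV::2 set). f i) = f 0 + f 1"
  by (simp add: UNIV2)

lemma sum22: "(\<Sum>i\<in>(UNIV::(2\<times>2) set). f i) = f (0,0) + f (0,1) + f (1,0) + f (1,1)"
proof -
  have "(\<Sum>i\<in>(UNIV::(2\<times>2) set). f i) = (\<Sum>i\<in>(UNIV::2 set). \<Sum>j\<in>(UNIV::2 set). f (i,j))"
    by (simp add: sum.cartesian_product flip: UNIV_Times_UNIV)
  then show ?thesis by (simp add: sum2 add.assoc)
qed

lemma parseval:
  fixes y :: "2 \<Rightarrow> 2 \<Rightarrow> complex" and q :: "2 \<Rightarrow> complex"
  assumes "is_onb y"
  shows "(\<Sum>j\<in>UNIV. (cmod (cinner (y j) q))\<^sup>2) = (\<Sum>k\<in>UNIV. (cmod (q k))\<^sup>2)"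
proof -
  define u0 where "u0 = y 0 0" define u1 where "u1 = y 0 1"
  define v0 where "v0 = y 1 0" define v1 where "v1 = y 1 1"
  have o: "\<And>k l. cinner (y k) (y l) = (if k = l then 1 else 0)" using assms by (simp add: is_onb_def)
  have nu: "cnj u0 * u0 + cnj u1 * u1 = 1" using o[of 0 0] by (simp add: cinner_def sum2 u0_def u1_def)
  have nv: "cnj v0 * v0 + cnj v1 * v1 = 1" using o[of 1 1] by (simp add: cinner_def sum2 v0_def v1_def)
  have ouv: "cnj u0 * v0 + cnj u1 * v1 = 0" using o[of 0 1] by (simp add: cinner_def sum2 u0_def u1_def v0_def v1_def)
  have ovu: "cnj v0 * u0 + cnj v1 * u1 = 0" using o[of 1 0] by (simp add: cinner_def sum2 u0_def u1_def v0_def v1_def)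
  define d where "d = u0 * v1 - u1 * v0"
  have d1: "d * cnj u0 = v1"
  proof -
    have "d * cnj u0 = u0 * v1 * cnj u0 - u1 * (cnj u0 * v0)" by (simp add: d_def algebra_simps)
    also have "\<dots> = v1 * (cnj u0 * u0 + cnj u1 * u1)" using ouv
      by (simp add: eq_neg_iff_add_eq_0[symmetric] algebra_simps)
    finally show ?thesis using nu by simp
  qed
  have d2: "d * cnj u1 = - v0"
  proof -
    have "d * cnj u1 = u0 * (cnj u1 * v1) - u1 * v0 * cnj u1" by (simp add: d_def algebra_simps)
    also have "cnj u1 * v1 = - (cnj u0 * v0)" using ouv by (simp add: eq_neg_iff_add_eq_0 add.commute)
    also have "u0 * - (cnj u0 * v0) - u1 * v0 * cnj u1 = - v0 * (cnj u0 * u0 + cnj u1 * u1)"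
      by (simp add: algebra_simps)
    finally show ?thesis using nu by simp
  qed
  have d3: "d * cnj v0 = - u1"
  proof -
    have "d * cnj v0 = (cnj v0 * u0) * v1 - u1 * v0 * cnj v0" by (simp add: d_def algebra_simps)
    also have "\<dots> = - u1 * (cnj v0 * v0 + cnj v1 * v1)" using ovu
      by (simp add: eq_neg_iff_add_eq_0[symmetric] algebra_simps)
    finally show ?thesis using nv by simp
  qed
  have d4: "d * cnj v1 = u0"
  proof -
    have "d * cnj v1 = u0 * v1 * cnj v1 - (cnj v1 * u1) * v0" by (simp add: d_def algebra_simps)
    also have "cnj v1 * u1 = - (cnj v0 * u0)" using ovu by (simp add: eq_neg_iff_add_eq_0 add.commute)
    also have "u0 * v1 * cnj v1 - - (cnj v0 * u0) * v0 = u0 * (cnj v0 * v0 + cnj v1 * v1)"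
      by (simp add: algebra_simps)
    finally show ?thesis using nv by simp
  qed
  have dd: "d * cnj d = 1"
  proof -
    have "d * cnj d = (d * cnj u0) * cnj v1 - (d * cnj u1) * cnj v0" by (simp add: d_def algebra_simps)
    also have "\<dots> = 1" using d1 d2 nv by (simp add: algebra_simps)
    finally show ?thesis .
  qed
  hence dnz: "d \<noteq> 0" by auto
  have c00: "cnj u0 * u0 + cnj v0 * v0 = 1"
  proof -
    have "d * (cnj u0 * u0 + cnj v0 * v0) = u0 * (d * cnj u0) + v0 * (d * cnj v0)" by (simp add: algebra_simps)
    also have "\<dots> = d" using d1 d3 by (simp only: d1 d3) (simp add: d_def algebra_simps)
    finally show ?thesis using dnz by simp
  qed
  have c11: "cnj u1 * u1 + cnj v1 * v1 = 1"
  proof -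
    have "d * (cnj u1 * u1 + cnj v1 * v1) = u1 * (d * cnj u1) + v1 * (d * cnj v1)" by (simp add: algebra_simps)
    also have "\<dots> = d" using d2 d4 by (simp only: d2 d4) (simp add: d_def algebra_simps)
    finally show ?thesis using dnz by simp
  qed
  have c01: "cnj u0 * u1 + cnj v0 * v1 = 0"
  proof -
    have "d * (cnj u0 * u1 + cnj v0 * v1) = u1 * (d * cnj u0) + v1 * (d * cnj v0)" by (simp add: algebra_simps)
    also have "\<dots> = 0" using d1 d3 by (simp only: d1 d3) (simp add: algebra_simps)
    finally show ?thesis using dnz by simp
  qed
  have c10: "cnj u1 * u0 + cnj v1 * v0 = 0"
    using arg_cong[OF c01, of cnj] by (simp add: algebra_simps)
  define q0 where "q0 = q 0" define q1 where "q1 = q 1"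
  have "complex_of_real (\<Sum>j\<in>UNIV. (cmod (cinner (y j) q))\<^sup>2)
      = (cnj u0 * q0 + cnj u1 * q1) * cnj (cnj u0 * q0 + cnj u1 * q1)
        + (cnj v0 * q0 + cnj v1 * q1) * cnj (cnj v0 * q0 + cnj v1 * q1)"
    unfolding sum2 cinner_def of_real_add complex_norm_square by (simp add: u0_def u1_def v0_def v1_def q0_def q1_def)
  also have "\<dots> = q0 * cnj q0 * (cnj u0 * u0 + cnj v0 * v0) + q1 * cnj q1 * (cnj u1 * u1 + cnj v1 * v1)
       + q0 * cnj q1 * (cnj u0 * u1 + cnj v0 * v1) + q1 * cnj q0 * (cnj u1 * u0 + cnj v1 * v0)"
    by (simp add: algebra_simps)
  also have "\<dots> = q0 * cnj q0 + q1 * cnj q1" using c00 c11 c01 c10 by simp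
  also have "\<dots> = complex_of_real (\<Sum>k\<in>UNIV. (cmod (q k))\<^sup>2)"
    unfolding sum2 of_real_add complex_norm_square by (simp add: q0_def q1_def)
  finally show ?thesis using of_real_eq_iff by blast
qed

lemma tensor_first:
  "cinner (tensor (x i) (y j)) p = cinner (y j) (\<lambda>l. \<Sum>k\<in>UNIV. cnj (x i k) * p (k, l))"
  by (simp add: cinner_def tensor_def sum22 sum2 algebra_simps)

lemma tensor_second:
  "cinner (tensor (x i) (y j)) p = cinner (x i) (\<lambda>k. \<Sum>l\<in>UNIV. cnj (y j l) * p (k, l))"
  by (simp add: cinner_def tensor_def sum22 sum2 algebra_simps)

lemma mf:
  assumes "is_onb b" "is_onb b'" "is_product e a b" "is_product f a b'"
  shows "marginal_first e f p"
  unfolding marginal_first_def prob_def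
  using assms by (simp add: is_product_def tensor_first parseval)

lemma ms:
  assumes "is_onb a" "is_onb a'" "is_product e a b" "is_product f a' b"
  shows "marginal_second e f p"
  unfolding marginal_second_def prob_def
  using assms by (simp add: is_product_def tensor_second parseval)

theorem theorem4:
  fixes a a' b b' :: "2 \<Rightarrow> 2 \<Rightarrow> complex"
    and eAB eAB' eA'B eA'B' :: meas
    and p :: "2 \<times> 2 \<Rightarrow> complex"
  assumes "is_onb a" and "is_onb a'" and "is_onb b" and "is_onb b'"
    and "is_meas eAB" and "is_meas eAB'" and "is_meas eA'B" and "is_meas eA'B'"
    and "unit_vec p"
    and "\<not> marginal_first eAB eAB' p"
    and "\<not> marginal_first eA'B eA'B' p"
    and "\<not> marginal_second eAB eA'B p"
    and "\<not> marginal_second eAB' eA'B' p"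
  shows "2 \<le> length (filter (\<lambda>P. \<not> P)
           [is_product eAB a b, is_product eAB' a b', is_product eA'B a' b, is_product eA'B' a' b'])"
proof -
  have 1: "\<not> (is_product eAB a b \<and> is_product eAB' a b')" using assms mf by blast
  have 2: "\<not> (is_product eA'B a' b \<and> is_product eA'B' a' b')" using assms mf by blast
  have 3: "\<not> (is_product eAB a b \<and> is_product eA'B a' b)" using assms ms by blast
  have 4: "\<not> (is_product eAB' a b' \<and> is_product eA'B' a' b')" using assms ms by blast
  show ?thesis using 1 2 3 4 by auto
qed

end
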